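(* Consider the sparse sequence model and the weights $\phi_i$ described in the context, with $\lambda_n = O(n^{-(a+1)})$ as $n\to\infty$ for a constant $a>0$, and with $\alpha<2T$. Writing $S^\star = S_{\theta^\star}$, \[ \sum_{i=1}^n \mathsf{E}_{\theta_i^\star}\phi_i \le |S^\star| + o(1) \lesssim |S^\star|, \] where the $o(1)$ term is bounded by a quantity not depending on $\theta^\star$ that tends to $0$ as $n\to\infty$.
   Context: Model: one observes $Y_i = \theta_i + Z_i$, $i=1,\ldots,n$, where $\theta\in\mathbb{R}^n$ is unknown and $Z_1,\ldots,Z_n$ are iid copies of a random variable $Z$ with fully known distribution, mean zero, and subgaussian in the sense that $\mathsf{E}\exp(tZ) \le \exp(\sigma^2 t^2/2)$ for all $t\in\mathbb{R}$, for a known constant $\sigma>0$. $T>0$ denotes the upper endpoint of the interval on which the moment generating function of $(Z/\sigma)^2$ exists, i.e. $\mathsf{E} e^{t (Z/\sigma)^2}$ is finite (bounded by a constant) for $t\in(0,T]$. $\mathsf{E}_{\theta_i^\star}$ denotes expectation when $Y_i$ has mean $\theta_i^\star$. For $\theta\in\mathbb{R}^n$, $S_\theta=\{i:\theta_i\neq 0\}$. Weights: fix constants $\alpha\in(0,1)$, $\gamma>0$ and a sequence $\lambda_n\in(0,1)$, and define $\phi_i\in(0,1)$ by $\operatorname{logit}(\phi_i) = \operatorname{logit}(\lambda_n) + \tfrac12\log\tfrac{\gamma}{\alpha+\gamma} + \tfrac{\alpha}{2\sigma^2} Y_i^2$, with $\operatorname{logit}(p)=\log\{p/(1-p)\}$.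 *)

theory Defs
  imports "HOL-Probability.Probability" "HOL-Library.Landau_Symbols"
begin

definition logit :: "real \<Rightarrow> real" where
  "logit p = ln (p / (1 - p))"

definition expit :: "real \<Rightarrow> real" where
  "expit x = 1 / (1 + exp (- x))"

definition phi_weight :: "real \<Rightarrow> real \<Rightarrow> real \<Rightarrow> real \<Rightarrow> real \<Rightarrow> real" where
  "phi_weight \<sigma> \<alpha> \<gamma> lam y =
     expit (logit lam + ln (\<gamma> / (\<alpha> + \<gamma>)) / 2 + \<alpha> / (2 * \<sigma>\<^sup>2) * y\<^sup>2)"

text \<open>E_{theta_i}(phi_i) where Y_i = theta_i + Z, Z distributed according to D.\<close>
definition expected_phi ::
  "real measure \<Rightarrow> real \<Rightarrow> real \<Rightarrow> real \<Rightarrow> real \<Rightarrow> real \<Rightarrow> real" where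
  "expected_phi D \<sigma> \<alpha> \<gamma> lam \<theta>i =
     integral\<^sup>L D (\<lambda>z. phi_weight \<sigma> \<alpha> \<gamma> lam (\<theta>i + z))"

end

theory Submission
  imports Defs
begin

lemma expit_le_exp: "expit x \<le> exp x"
proof -
  have "1 / (1 + exp (- x)) \<le> 1 / exp (- x)"
    by (rule divide_left_mono) (auto simp: add_pos_pos)
  also have "1 / exp (- x) = exp x" by (simp add: exp_minus_inverse exp_minus field_simps)
  finally show ?thesis by (simp add: expit_def)
qed

lemma expit_bounds: "0 < expit x" "expit x < 1"
proof -
  have h: "0 < 1 + exp (- x)" by (simp add: add_pos_pos)
  show "0 < expit x" unfolding expit_def using h by simp
  show "expit x < 1" unfolding expit_def using h by (simp add: divide_less_eq)
qed

lemma rate_lemma: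
  fixes lam :: "nat \<Rightarrow> real" and a :: real
  assumes lam_range: "\<forall>n. 0 < lam n \<and> lam n < 1"
    and a_pos: "a > 0"
    and lam_rate: "lam \<in> O(\<lambda>n. real n powr (- (a + 1)))"
  shows "(\<lambda>n. real n * (lam n / (1 - lam n))) \<longlonglongrightarrow> 0"
proof -
  obtain c where c: "c > 0" and ev: "eventually (\<lambda>n. norm (lam n) \<le> c * norm (real n powr (- (a + 1)))) sequentially"
    using lam_rate by (elim landau_o.bigE) auto
  have pw: "(\<lambda>n. real n powr (- a)) \<longlonglongrightarrow> 0"
    by (rule tendsto_neg_powr) (use a_pos filterlim_real_sequentially in auto)
  have b1: "eventually (\<lambda>n. real n * lam n \<le> c * real n powr (- a)) sequentially"
    using ev eventually_ge_at_top[of 1]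
  proof eventually_elim
    case (elim n)
    have "real n * lam n \<le> real n * (c * real n powr (- (a + 1)))"
      using elim lam_range by (intro mult_left_mono) auto
    also have "\<dots> = c * (real n powr 1 * real n powr (- (a + 1)))"
      using elim by simp
    also have "real n powr 1 * real n powr (- (a + 1)) = real n powr (- a)"
      by (simp only: powr_add[symmetric]) simp
    finally show ?case .
  qed
  have nl: "(\<lambda>n. real n * lam n) \<longlonglongrightarrow> 0"
  proof (rule tendsto_sandwich[of "\<lambda>_. 0" _ _ "\<lambda>n. c * real n powr (- a)"])
    show "eventually (\<lambda>n. 0 \<le> real n * lam n) sequentially" using lam_range
      by (intro always_eventually allI) (metis less_imp_le mult_nonneg_nonneg of_nat_0_le_iff)
    show "eventually (\<lambda>n. real n * lam n \<le> c * real n powr (- a)) sequentially" by (rule b1)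
    show "(\<lambda>n. c * real n powr (- a)) \<longlonglongrightarrow> 0" using tendsto_mult_right_zero[OF pw] by simp
  qed simp
  have l0: "lam \<longlonglongrightarrow> 0"
  proof (rule tendsto_sandwich[of "\<lambda>_. 0" _ _ "\<lambda>n. real n * lam n"])
    show "eventually (\<lambda>n. 0 \<le> lam n) sequentially" using lam_range
      by (intro always_eventually) (auto intro: less_imp_le)
    show "eventually (\<lambda>n. lam n \<le> real n * lam n) sequentially"
      using eventually_ge_at_top[of 1]
    proof eventually_elim
      case (elim n) thus ?case using lam_range[rule_format, of n]
        by (metis mult_le_cancel_right1 of_nat_1 of_nat_mono less_imp_le not_le)
    qed
  qed (use nl in auto)
  have "(\<lambda>n. (real n * lam n) / (1 - lam n)) \<longlonglongrightarrow> 0 / (1 - 0)"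
    by (intro tendsto_intros nl l0) simp
  thus ?thesis by simp
qed

theorem lemma1:
  fixes D :: "real measure" and \<sigma> T \<alpha> \<gamma> a :: real and lam :: "nat \<Rightarrow> real"
  assumes D_prob: "prob_space D" and D_borel: "sets D = sets borel"
    and mean0: "integrable D (\<lambda>z. z)" "(\<integral>z. z \<partial>D) = 0"
    and \<sigma>_pos: "\<sigma> > 0"
    and subgauss: "\<forall>t::real. integrable D (\<lambda>z. exp (t * z))
                      \<and> (\<integral>z. exp (t * z) \<partial>D) \<le> exp (\<sigma>\<^sup>2 * t\<^sup>2 / 2)"
    and T_pos: "T > 0"
    and mgf_sq: "\<forall>t\<in>{0<..T}. integrable D (\<lambda>z. exp (t * (z / \<sigma>)\<^sup>2))"
    and \<alpha>_range: "0 < \<alpha>" "\<alpha> < 1" and \<alpha>_T: "\<alpha> < 2 * T"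
    and \<gamma>_pos: "\<gamma> > 0"
    and lam_range: "\<forall>n. 0 < lam n \<and> lam n < 1"
    and a_pos: "a > 0"
    and lam_rate: "lam \<in> O(\<lambda>n. real n powr (- (a + 1)))"
  shows "\<exists>\<epsilon> :: nat \<Rightarrow> real. \<epsilon> \<longlonglongrightarrow> 0 \<and>
           (\<forall>n. \<forall>\<theta> :: nat \<Rightarrow> real.
              (\<Sum>i<n. expected_phi D \<sigma> \<alpha> \<gamma> (lam n) (\<theta> i))
                \<le> real (card {i. i < n \<and> \<theta> i \<noteq> 0}) + \<epsilon> n)"
proof -
  interpret P: prob_space D by (rule D_prob)
  define g where "g = (\<lambda>z::real. exp (\<alpha> / 2 * (z / \<sigma>)\<^sup>2))"
  define C where "C = (\<integral>z. g z \<partial>D)"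
  define K where "K = exp (ln (\<gamma> / (\<alpha> + \<gamma>)) / 2) * C"
  define \<epsilon> where "\<epsilon> = (\<lambda>n. real n * (lam n / (1 - lam n)) * K)"
  have gint: "integrable D g"
  proof -
    have "\<alpha> / 2 \<in> {0<..T}" using \<alpha>_T \<alpha>_range by auto
    thus ?thesis unfolding g_def using mgf_sq by blast
  qed
  have meas: "(\<lambda>z. phi_weight \<sigma> \<alpha> \<gamma> l (t + z)) \<in> borel_measurable D" for l t
    unfolding measurable_cong_sets[OF D_borel refl] phi_weight_def expit_def
    by measurable
  have pint: "integrable D (\<lambda>z. phi_weight \<sigma> \<alpha> \<gamma> l (t + z))" for l t
  proof (rule P.integrable_const_bound[where B=1])
    show "AE z in D. norm (phi_weight \<sigma> \<alpha> \<gamma> l (t + z)) \<le> 1"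
      using expit_bounds by (auto simp: phi_weight_def less_imp_le)
  qed (rule meas)
  have le1: "expected_phi D \<sigma> \<alpha> \<gamma> l t \<le> 1" for l t
  proof -
    have "expected_phi D \<sigma> \<alpha> \<gamma> l t \<le> (\<integral>z. 1 \<partial>D)"
      unfolding expected_phi_def
      by (rule integral_mono[OF pint]) (auto simp: phi_weight_def expit_bounds less_imp_le)
    thus ?thesis using P.prob_space by simp
  qed
  have le0: "expected_phi D \<sigma> \<alpha> \<gamma> (lam n) 0 \<le> lam n / (1 - lam n) * K" for n
  proof -
    have l: "0 < lam n" "lam n < 1" using lam_range by auto
    have pt: "phi_weight \<sigma> \<alpha> \<gamma> (lam n) z \<le> (lam n / (1 - lam n) * exp (ln (\<gamma> / (\<alpha> + \<gamma>)) / 2)) * g z" for z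
    proof -
      have "phi_weight \<sigma> \<alpha> \<gamma> (lam n) z \<le> exp (logit (lam n) + ln (\<gamma> / (\<alpha> + \<gamma>)) / 2 + \<alpha> / (2 * \<sigma>\<^sup>2) * z\<^sup>2)"
        unfolding phi_weight_def by (rule expit_le_exp)
      also have "\<dots> = exp (logit (lam n)) * exp (ln (\<gamma> / (\<alpha> + \<gamma>)) / 2) * exp (\<alpha> / (2 * \<sigma>\<^sup>2) * z\<^sup>2)"
        by (simp add: exp_add)
      also have "exp (logit (lam n)) = lam n / (1 - lam n)"
        unfolding logit_def using l by simp
      also have "\<alpha> / (2 * \<sigma>\<^sup>2) * z\<^sup>2 = \<alpha> / 2 * (z / \<sigma>)\<^sup>2"
        by (simp add: power_divide)
      finally show ?thesis unfolding g_def by simp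
    qed
    have "expected_phi D \<sigma> \<alpha> \<gamma> (lam n) 0 \<le> (\<integral>z. (lam n / (1 - lam n) * exp (ln (\<gamma> / (\<alpha> + \<gamma>)) / 2)) * g z \<partial>D)"
      unfolding expected_phi_def
      by (intro integral_mono pint integrable_mult_right gint) (use pt in simp_all)
    also have "\<dots> = lam n / (1 - lam n) * K"
      unfolding K_def C_def by simp
    finally show ?thesis .
  qed
  have Kpos: "0 \<le> K" unfolding K_def C_def g_def
    by (intro mult_nonneg_nonneg integral_nonneg_AE) auto
  have main: "(\<Sum>i<n. expected_phi D \<sigma> \<alpha> \<gamma> (lam n) (\<theta> i))
                \<le> real (card {i. i < n \<and> \<theta> i \<noteq> 0}) + \<epsilon> n" for n \<theta>
  proof -
    define S where "S = {i. i < n \<and> \<theta> i \<noteq> 0}"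
    define N where "N = {i. i < n \<and> \<theta> i = 0}"
    have split: "{..<n} = S \<union> N" "S \<inter> N = {}" unfolding S_def N_def by auto
    have fin: "finite S" "finite N" unfolding S_def N_def by auto
    have b: "0 \<le> lam n / (1 - lam n) * K" using lam_range[rule_format, of n] Kpos
      by (intro mult_nonneg_nonneg divide_nonneg_nonneg) auto
    have "(\<Sum>i<n. expected_phi D \<sigma> \<alpha> \<gamma> (lam n) (\<theta> i))
        = (\<Sum>i\<in>S. expected_phi D \<sigma> \<alpha> \<gamma> (lam n) (\<theta> i)) + (\<Sum>i\<in>N. expected_phi D \<sigma> \<alpha> \<gamma> (lam n) (\<theta> i))"
      unfolding split(1) by (rule sum.union_disjoint[OF fin split(2)])
    also have "(\<Sum>i\<in>S. expected_phi D \<sigma> \<alpha> \<gamma> (lam n) (\<theta> i)) \<le> (\<Sum>i\<in>S. 1)"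
      by (rule sum_mono) (rule le1)
    also have "(\<Sum>i\<in>N. expected_phi D \<sigma> \<alpha> \<gamma> (lam n) (\<theta> i)) \<le> (\<Sum>i\<in>N. lam n / (1 - lam n) * K)"
      by (rule sum_mono) (use le0 in \<open>auto simp: N_def\<close>)
    also have "(\<Sum>i\<in>N. lam n / (1 - lam n) * K) = real (card N) * (lam n / (1 - lam n) * K)"
      by simp
    also have "\<dots> \<le> real n * (lam n / (1 - lam n) * K)"
    proof (rule mult_right_mono[OF _ b])
      have "card N \<le> card {..<n}" unfolding N_def by (intro card_mono) auto
      thus "real (card N) \<le> real n" by simp
    qed
    finally show ?thesis unfolding \<epsilon>_def S_def by simp
  qed
  have "\<epsilon> \<longlonglongrightarrow> 0 * K"
    unfolding \<epsilon>_def by (intro tendsto_mult_right rate_lemma[OF lam_range a_pos lam_rate])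
  thus ?thesis using main by (intro exI[of _ \<epsilon>]) simp
qed

end
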